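(* Let $K$ be a finite simplicial complex, $f$ an injective filtration function on $K$, $n$ a positive integer, and $\alpha$ an $n$-cycle whose class $[\alpha]\in H_n(K^f_a)$ is born at $a$ and terminated at a finite value $b>a$. Let $R_u=\min\{|f(\tau)-b|: \tau \text{ a birth } (n+1)\text{-simplex with } f(\tau)>b\}$ (or $\infty$ if there is no such $\tau$), and $R_l=\min\{|f(\tau)-b|: \tau \text{ a terminal } (n+1)\text{-simplex with } f(\tau)<b\}$ (or $\infty$ if there is no such $\tau$). Then $[\alpha]$ is $\varepsilon$-terminally-rigid for $\varepsilon=\frac12\min\{b-a,R_u,R_l\}$.
   Context: A filtration function on a finite simplicial complex $K$ is a map $f\colon K\to\mathbb{R}$ with $f(\sigma)\le f(\tau)$ whenever $\sigma$ is a face of $\tau$. Sublevel complexes are $K^f_r=f^{-1}((-\infty,r])$; homology is with coefficients in a fixed field. For a nontrivial class $[\alpha]\in H_n(K^f_r)$, its birth is the infimum of $q\le r$ such that $[\alpha]$ is in the image of $H_n(K^f_q)\to H_n(K^f_r)$, and its termination scale is the infimum of $q\ge r$ such that $[\alpha]$ maps to $0$ in $H_n(K^f_q)$. Since $f$ is injective, each simplex $\sigma$ is either a birth simplex (adding it creates a new nontrivial homology class, i.e. $\partial\sigma$ is already a boundary in the complex of simplices with smaller $f$-value) or a terminal simplex (adding it makes a nontrivial homology class trivial). $\|f-g\|_\infty=\max_{\sigma\in K}|f(\sigma)-g(\sigma)|$. For an injective filtration function $g$ with $\|f-g\|_\infty\le\varepsilon$, $\Delta_{g,\alpha}$ is the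 simplex $\tau$ such that $\alpha$ is a boundary in $K^g_{g(\tau)}$ but not in $K^g_r$ for $r<g(\tau)$; $\Sigma_\varepsilon$ is the set of all such $\Delta_{g,\alpha}$ over injective filtration functions $g$ with $\|f-g\|_\infty\le\varepsilon$. The class $[\alpha]$ is $\varepsilon$-terminally-rigid if $|\Sigma_\varepsilon|=1$. *)

theory Defs
  imports Complex_Main
begin

text \<open>The vertex order fixes
orientations for the simplicial boundary.\<close>

definition simplicial_complex :: "'v set set \<Rightarrow> bool" where
  "simplicial_complex K \<longleftrightarrow> finite K \<and>
     (\<forall>\<sigma>\<in>K. finite \<sigma> \<and> \<sigma> \<noteq> {}) \<and>
     (\<forall>\<sigma>\<in>K. \<forall>\<tau>. \<tau> \<subseteq> \<sigma> \<and> \<tau> \<noteq> {} \<longrightarrow> \<tau> \<in> K)"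

definition is_simplex_dim :: "nat \<Rightarrow> 'v set \<Rightarrow> bool" where
  "is_simplex_dim k \<sigma> \<longleftrightarrow> finite \<sigma> \<and> card \<sigma> = k + 1"

definition is_chain :: "'v set set \<Rightarrow> nat \<Rightarrow> ('v set \<Rightarrow> 'k::field) \<Rightarrow> bool" where
  "is_chain L k c \<longleftrightarrow> (\<forall>\<sigma>. c \<sigma> \<noteq> 0 \<longrightarrow> \<sigma> \<in> L \<and> is_simplex_dim k \<sigma>)"

text \<open>Incidence number [\<sigma> : \<tau>] = (-1)^i when \<tau> is \<sigma> with its i-th vertex
(in increasing order, counted from 0) removed, and 0 otherwise.\<close>
definition incidence :: "'v::linorder set \<Rightarrow> 'v set \<Rightarrow> 'k::field" where
  "incidence \<sigma> \<tau> =
     (if finite \<sigma> \<and> \<tau> \<subseteq> \<sigma> \<and> card (\<sigma> - \<tau>) = 1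
      then (- 1) ^ card {w\<in>\<sigma>. w < (THE v. v \<in> \<sigma> - \<tau>)} else 0)"

definition boundary_op :: "('v::linorder set \<Rightarrow> 'k::field) \<Rightarrow> ('v set \<Rightarrow> 'k)" where
  "boundary_op c = (\<lambda>\<tau>. \<Sum>\<sigma>\<in>{\<sigma>. c \<sigma> \<noteq> 0}. c \<sigma> * incidence \<sigma> \<tau>)"

definition is_cycle :: "'v::linorder set set \<Rightarrow> nat \<Rightarrow> ('v set \<Rightarrow> 'k::field) \<Rightarrow> bool" where
  "is_cycle L k z \<longleftrightarrow> is_chain L k z \<and> boundary_op z = (\<lambda>_. 0)"

definition is_boundary :: "'v::linorder set set \<Rightarrow> nat \<Rightarrow> ('v set \<Rightarrow> 'k::field) \<Rightarrow> bool" where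
  "is_boundary L k z \<longleftrightarrow> (\<exists>c. is_chain L (Suc k) c \<and> boundary_op c = z)"

definition elem_chain :: "'v set \<Rightarrow> ('v set \<Rightarrow> 'k::field)" where
  "elem_chain \<tau> = (\<lambda>\<sigma>. if \<sigma> = \<tau> then 1 else 0)"

definition filtration :: "'v set set \<Rightarrow> ('v set \<Rightarrow> real) \<Rightarrow> bool" where
  "filtration K f \<longleftrightarrow> (\<forall>\<sigma>\<in>K. \<forall>\<tau>\<in>K. \<sigma> \<subseteq> \<tau> \<longrightarrow> f \<sigma> \<le> f \<tau>)"

definition inj_filtration :: "'v set set \<Rightarrow> ('v set \<Rightarrow> real) \<Rightarrow> bool" where
  "inj_filtration K f \<longleftrightarrow> filtration K f \<and> inj_on f K"

definition sublevel :: "'v set set \<Rightarrow> ('v set \<Rightarrow> real) \<Rightarrow> real \<Rightarrow> 'v set set" where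
  "sublevel K f r = {\<sigma>\<in>K. f \<sigma> \<le> r}"

text \<open>Birth of the class [z] in H_k(K^f_r): infimum of q \<le> r such that [z] lies in
the image of H_k(K^f_q) \<rightarrow> H_k(K^f_r).\<close>
definition birth :: "'v::linorder set set \<Rightarrow> ('v set \<Rightarrow> real) \<Rightarrow> nat \<Rightarrow> real
     \<Rightarrow> ('v set \<Rightarrow> 'k::field) \<Rightarrow> real" where
  "birth K f k r z = Inf {q. q \<le> r \<and>
      (\<exists>w. is_cycle (sublevel K f q) k w \<and> is_boundary (sublevel K f r) k (\<lambda>\<sigma>. z \<sigma> - w \<sigma>))}"

definition termination_scale :: "'v::linorder set set \<Rightarrow> ('v set \<Rightarrow> real) \<Rightarrow> nat \<Rightarrow> real
     \<Rightarrow> ('v set \<Rightarrow> 'k::field) \<Rightarrow> real" where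
  "termination_scale K f k r z = Inf {q. q \<ge> r \<and> is_boundary (sublevel K f q) k z}"

definition birth_simplex :: "'k::field itself \<Rightarrow> 'v::linorder set set \<Rightarrow> ('v set \<Rightarrow> real)
     \<Rightarrow> 'v set \<Rightarrow> bool" where
  "birth_simplex _ K f \<tau> \<longleftrightarrow> \<tau> \<in> K \<and>
     (\<exists>k. card \<tau> = k + 2 \<and>
        is_boundary {\<sigma>\<in>K. f \<sigma> < f \<tau>} k (boundary_op (elem_chain \<tau> :: 'v set \<Rightarrow> 'k)))"

definition terminal_simplex :: "'k::field itself \<Rightarrow> 'v::linorder set set \<Rightarrow> ('v set \<Rightarrow> real)
     \<Rightarrow> 'v set \<Rightarrow> bool" where
  "terminal_simplex _ K f \<tau> \<longleftrightarrow> \<tau> \<in> K \<and>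
     (\<exists>k (z :: 'v set \<Rightarrow> 'k). card \<tau> = k + 2 \<and>
        is_cycle {\<sigma>\<in>K. f \<sigma> < f \<tau>} k z \<and>
        \<not> is_boundary {\<sigma>\<in>K. f \<sigma> < f \<tau>} k z \<and>
        is_boundary {\<sigma>\<in>K. f \<sigma> \<le> f \<tau>} k z)"

definition is_Delta :: "'v::linorder set set \<Rightarrow> ('v set \<Rightarrow> real) \<Rightarrow> nat
     \<Rightarrow> ('v set \<Rightarrow> 'k::field) \<Rightarrow> 'v set \<Rightarrow> bool" where
  "is_Delta K g k z \<tau> \<longleftrightarrow> \<tau> \<in> K \<and> is_boundary (sublevel K g (g \<tau>)) k z \<and>
     (\<forall>r < g \<tau>. \<not> is_boundary (sublevel K g r) k z)"

definition Sigma_eps :: "'v::linorder set set \<Rightarrow> ('v set \<Rightarrow> real) \<Rightarrow> nat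
     \<Rightarrow> ('v set \<Rightarrow> 'k::field) \<Rightarrow> real \<Rightarrow> 'v set set" where
  "Sigma_eps K f k z \<epsilon> = {\<tau>. \<exists>g. inj_filtration K g \<and> (\<forall>\<sigma>\<in>K. \<bar>f \<sigma> - g \<sigma>\<bar> \<le> \<epsilon>) \<and>
       is_Delta K g k z \<tau>}"

definition terminally_rigid :: "'v::linorder set set \<Rightarrow> ('v set \<Rightarrow> real) \<Rightarrow> nat
     \<Rightarrow> ('v set \<Rightarrow> 'k::field) \<Rightarrow> real \<Rightarrow> bool" where
  "terminally_rigid K f k z \<epsilon> \<longleftrightarrow> card (Sigma_eps K f k z \<epsilon>) = 1"

end

theory Submission
  imports Defs
begin

lemma bsum:
  assumes "finite S" "{\<sigma>. c \<sigma> \<noteq> 0} \<subseteq> S"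
  shows "boundary_op c \<tau> = (\<Sum>\<sigma>\<in>S. c \<sigma> * incidence \<sigma> \<tau>)"
  unfolding boundary_op_def
  by (rule sum.mono_neutral_left) (use assms in auto)

lemma bd_elem: "boundary_op (elem_chain t :: 'v::linorder set \<Rightarrow> 'k::field) = (\<lambda>\<tau>. incidence t \<tau>)"
proof
  fix \<tau>
  have "{\<sigma>. (elem_chain t \<sigma> :: 'k) \<noteq> 0} = {t}" by (auto simp: elem_chain_def)
  then show "boundary_op (elem_chain t :: 'v::linorder set \<Rightarrow> 'k::field) \<tau> = incidence t \<tau>"
    by (simp add: boundary_op_def elem_chain_def)
qed

lemma bdry_mono: "is_boundary L k z \<Longrightarrow> L \<subseteq> L' \<Longrightarrow> is_boundary L' k z"
  unfolding is_boundary_def is_chain_def by blast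

lemma inc_nz: "incidence \<sigma> \<tau> \<noteq> 0 \<Longrightarrow> finite \<sigma> \<and> \<tau> \<subseteq> \<sigma> \<and> card (\<sigma> - \<tau>) = 1"
  by (simp add: incidence_def split: if_splits)

lemma inc_remove:
  assumes "finite \<sigma>" "v \<in> \<sigma>"
  shows "incidence \<sigma> (\<sigma> - {v}) = (-1) ^ card {w\<in>\<sigma>. w < v}"
proof -
  have "\<sigma> - (\<sigma> - {v}) = {v}" using assms by auto
  then show ?thesis using assms by (simp add: incidence_def)
qed

lemma dd_false:
  assumes "finite s" "\<not> (\<rho> \<subseteq> s \<and> card (s - \<rho>) = 2)"
  shows "(\<Sum>v\<in>s - \<rho>. incidence s (s - {v}) * (incidence (s - {v}) \<rho> :: 'k::field)) = 0"
proof (rule sum.neutral, rule ballI)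
  fix v assume v: "v \<in> s - \<rho>"
  show "incidence s (s - {v}) * (incidence (s - {v}) \<rho> :: 'k) = 0"
  proof (rule ccontr)
    assume tv0: "incidence s (s - {v}) * (incidence (s - {v}) \<rho> :: 'k) \<noteq> 0"
    then have "incidence (s - {v}) \<rho> \<noteq> (0::'k)" by auto
    then have h: "\<rho> \<subseteq> s - {v}" "card (s - {v} - \<rho>) = 1" using inc_nz by blast+
    have eq: "s - \<rho> = insert v (s - {v} - \<rho>)" using v by blast
    have fin: "finite (s - {v} - \<rho>)" using assms by blast
    have "card (s - \<rho>) = Suc (card (s - {v} - \<rho>))"
      unfolding eq by (rule card_insert_disjoint[OF fin]) blast
    then have c2: "card (s - \<rho>) = 2" using h(2) by simp
    have "\<rho> \<subseteq> s" using h(1) by blast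
    then show False using assms(2) c2 by blast
  qed
qed
lemma dd_true:
  assumes "finite s" "\<rho> \<subseteq> s \<and> card (s - \<rho>) = 2"
  shows "(\<Sum>v\<in>s - \<rho>. incidence s (s - {v}) * (incidence (s - {v}) \<rho> :: 'k::field)) = 0"
proof -
  have c2': "card (s - \<rho>) = 2" using assms(2) by blast
  obtain x y where xy: "s - \<rho> = {x, y}" "x \<noteq> y" using card_2_iff[THEN iffD1, OF c2'] by blast
  obtain v w where vw: "s - \<rho> = {v, w}" "v < w"
  proof (cases "x < y")
    case True then show ?thesis by (rule that[OF xy(1)])
  next
    case False then have yx: "y < x" using linorder_neqE[OF xy(2)] by blast
    have "s - \<rho> = {y, x}" using xy(1) by (simp add: insert_commute)
    then show ?thesis by (rule that[OF _ yx])
  qed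
  have vs: "v \<in> s" "w \<in> s" using vw(1) by blast+
  have "\<rho> = s - (s - \<rho>)" using assms(2) by blast
  then have r0: "\<rho> = s - {v, w}" using vw(1) by simp
  have rho: "\<rho> = s - {v} - {w}" "\<rho> = s - {w} - {v}" unfolding r0 by blast+
  have fs: "finite (s - {v})" "finite (s - {w})" using assms(1) by blast+
  have w1: "w \<in> s - {v}" "v \<in> s - {w}" using vw(2) vs by blast+
  have e1: "{x \<in> s - {w}. x < v} = {x\<in>s. x < v}" using vw(2) by auto
  have e2: "{x\<in>s. x < w} = insert v {x \<in> s - {v}. x < w}" using vw(2) vs by auto
  have c2: "card {x\<in>s. x < w} = Suc (card {x \<in> s - {v}. x < w})"
    unfolding e2 by (rule card_insert_disjoint) (use assms(1) in auto)
  have i0: "incidence s (s - {v}) = ((-1) ^ card {x\<in>s. x < v} :: 'k)" by (rule inc_remove[OF assms(1) vs(1)])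
  have i1: "incidence (s - {v}) \<rho> = ((-1) ^ card {x \<in> s - {v}. x < w} :: 'k)"
    by (subst rho(1)) (rule inc_remove[OF fs(1) w1(1)])
  have i2: "incidence s (s - {w}) = ((-1) ^ card {x\<in>s. x < w} :: 'k)" by (rule inc_remove[OF assms(1) vs(2)])
  have i3: "incidence (s - {w}) \<rho> = ((-1) ^ card {x \<in> s - {w}. x < v} :: 'k)"
    by (subst rho(2)) (rule inc_remove[OF fs(2) w1(2)])
  have vw2: "v \<noteq> w" using vw(2) by simp
  have "(\<Sum>u\<in>s - \<rho>. incidence s (s - {u}) * (incidence (s - {u}) \<rho> :: 'k))
      = incidence s (s - {v}) * incidence (s - {v}) \<rho> + incidence s (s - {w}) * incidence (s - {w}) \<rho>"
    unfolding vw(1) using vw2 by simp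
  also have "\<dots> = 0" unfolding i0 i1 i2 i3 e1 c2 by simp
  finally show ?thesis .
qed
lemma dd:
  assumes "finite s"
  shows "boundary_op (\<lambda>\<tau>. incidence s \<tau> :: 'k::field) = (\<lambda>_. 0)"
proof
  fix \<rho> :: "'a set"
  have supp: "{\<tau>. incidence s \<tau> \<noteq> (0::'k)} \<subseteq> (\<lambda>v. s - {v}) ` s"
  proof
    fix \<tau> assume "\<tau> \<in> {\<tau>. incidence s \<tau> \<noteq> (0::'k)}"
    then have h: "\<tau> \<subseteq> s" "card (s - \<tau>) = 1" using inc_nz by blast+
    obtain v where v: "s - \<tau> = {v}" using card_1_singletonE[OF h(2)] by blast
    have "\<tau> = s - {v}" using v h(1) by blast
    moreover have "v \<in> s" using v by blast
    ultimately show "\<tau> \<in> (\<lambda>v. s - {v}) ` s" by blast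
  qed
  have "boundary_op (\<lambda>\<tau>. incidence s \<tau> :: 'k) \<rho>
      = (\<Sum>\<tau>\<in>(\<lambda>v. s - {v}) ` s. incidence s \<tau> * incidence \<tau> \<rho>)"
    by (rule bsum[OF finite_imageI[OF assms] supp])
  also have "\<dots> = (\<Sum>v\<in>s. incidence s (s - {v}) * (incidence (s - {v}) \<rho> :: 'k))"
  proof (subst sum.reindex)
    show "inj_on (\<lambda>v. s - {v}) s" by (auto simp: inj_on_def)
  qed simp
  also have "\<dots> = (\<Sum>v\<in>s - \<rho>. incidence s (s - {v}) * (incidence (s - {v}) \<rho> :: 'k))"
  proof (rule sum.mono_neutral_right)
    show "\<forall>v\<in>s - (s - \<rho>). incidence s (s - {v}) * (incidence (s - {v}) \<rho> :: 'k) = 0"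
    proof
      fix v assume "v \<in> s - (s - \<rho>)"
      then have "\<not> \<rho> \<subseteq> s - {v}" by auto
      then have "incidence (s - {v}) \<rho> = (0::'k)" using inc_nz by blast
      then show "incidence s (s - {v}) * (incidence (s - {v}) \<rho> :: 'k) = 0" by simp
    qed
  qed (use assms in blast)+
  also have "\<dots> = 0"
  proof (cases "\<rho> \<subseteq> s \<and> card (s - \<rho>) = 2")
    case True
    then show ?thesis by (rule dd_true[OF assms])
  next
    case False
    then show ?thesis by (rule dd_false[OF assms])
  qed
  finally show "boundary_op (\<lambda>\<tau>. incidence s \<tau> :: 'k) \<rho> = 0" .
qed
lemma comb:
  assumes "finite L" "finite S" "{\<sigma>. c \<sigma> \<noteq> 0} \<subseteq> S"
    and "\<forall>t\<in>S. is_boundary L k (\<lambda>\<tau>. incidence t \<tau> :: 'k::field)"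
  shows "is_boundary L k (boundary_op (c :: 'v::linorder set \<Rightarrow> 'k))"
proof -
  have "\<forall>t\<in>S. \<exists>h. is_chain L (Suc k) h \<and> boundary_op h = (\<lambda>\<tau>. incidence t \<tau> :: 'k)"
    using assms(4) unfolding is_boundary_def by blast
  then obtain h where h: "\<forall>t\<in>S. is_chain L (Suc k) (h t) \<and> boundary_op (h t) = (\<lambda>\<tau>. incidence t \<tau> :: 'k)"
    by (metis bchoice)
  define H where "H = (\<lambda>\<sigma>. \<Sum>t\<in>S. c t * h t \<sigma>)"
  have chain: "is_chain L (Suc k) H"
    unfolding is_chain_def
  proof (intro allI impI)
    fix \<sigma> assume "H \<sigma> \<noteq> 0"
    then obtain t where "t \<in> S" "c t * h t \<sigma> \<noteq> 0"
      unfolding H_def by (meson sum.not_neutral_contains_not_neutral)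
    then show "\<sigma> \<in> L \<and> is_simplex_dim (Suc k) \<sigma>" using h unfolding is_chain_def by auto
  qed
  have "boundary_op H = boundary_op c"
  proof
    fix \<tau>
    have supH: "{\<sigma>. H \<sigma> \<noteq> 0} \<subseteq> L" using chain unfolding is_chain_def by auto
    have "boundary_op H \<tau> = (\<Sum>\<sigma>\<in>L. H \<sigma> * incidence \<sigma> \<tau>)" by (rule bsum[OF assms(1) supH])
    also have "\<dots> = (\<Sum>\<sigma>\<in>L. \<Sum>t\<in>S. c t * (h t \<sigma> * incidence \<sigma> \<tau>))"
      by (simp add: H_def sum_distrib_right mult.assoc)
    also have "\<dots> = (\<Sum>t\<in>S. c t * (\<Sum>\<sigma>\<in>L. h t \<sigma> * incidence \<sigma> \<tau>))"
      by (subst sum.swap) (simp add: sum_distrib_left)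
    also have "\<dots> = (\<Sum>t\<in>S. c t * incidence t \<tau>)"
    proof (rule sum.cong[OF refl])
      fix t assume t: "t \<in> S"
      have "{\<sigma>. h t \<sigma> \<noteq> 0} \<subseteq> L" using h t unfolding is_chain_def by auto
      then have "(\<Sum>\<sigma>\<in>L. h t \<sigma> * incidence \<sigma> \<tau>) = boundary_op (h t) \<tau>"
        using bsum[OF assms(1)] by metis
      also have "\<dots> = incidence t \<tau>" using h t by simp
      finally show "c t * (\<Sum>\<sigma>\<in>L. h t \<sigma> * incidence \<sigma> \<tau>) = c t * incidence t \<tau>" by simp
    qed
    also have "\<dots> = boundary_op c \<tau>" by (rule bsum[symmetric]) (use assms in auto)
    finally show "boundary_op H \<tau> = boundary_op c \<tau>" .
  qed
  then show ?thesis using chain unfolding is_boundary_def by auto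
qed


lemma top_simplex:
  fixes K :: "'v::linorder set set" and f :: "'v set \<Rightarrow> real" and \<alpha> :: "'v set \<Rightarrow> 'k::field"
  assumes fin: "finite K" and bd: "is_boundary L n \<alpha>" and LK: "L \<subseteq> K"
    and nb: "\<not> is_boundary (sublevel K f a) n \<alpha>"
  shows "\<exists>s\<in>L. card s = n+2 \<and> is_boundary (sublevel K f (f s)) n \<alpha> \<and> a < f s"
proof -
  obtain c where c1: "is_chain L (Suc n) c" and c2: "boundary_op c = \<alpha>"
    using bd unfolding is_boundary_def by blast
  have cL: "c \<sigma> \<noteq> 0 \<Longrightarrow> \<sigma> \<in> L \<and> is_simplex_dim (Suc n) \<sigma>" for \<sigma>
    using c1 unfolding is_chain_def by blast
  define M where "M = {\<sigma>. c \<sigma> \<noteq> 0}"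
  have MsubL: "M \<subseteq> L" using cL unfolding M_def by blast
  have finM: "finite M" using finite_subset[OF MsubL finite_subset[OF LK fin]] .
  have Mne: "M \<noteq> {}"
  proof
    assume M0: "M = {}"
    have "c = (\<lambda>_. 0)"
    proof (rule ext)
      fix \<sigma> show "c \<sigma> = 0" using M0 unfolding M_def by blast
    qed
    then have a0: "\<alpha> = (\<lambda>_. 0)" using c2 by (simp add: boundary_op_def)
    have z1: "is_chain (sublevel K f a) (Suc n) (\<lambda>_. 0::'k)" unfolding is_chain_def by simp
    have z2: "boundary_op (\<lambda>_::'v set. 0::'k) = (\<lambda>_. 0)" by (simp add: boundary_op_def)
    have "is_boundary (sublevel K f a) n (\<lambda>_. (0::'k))"
      unfolding is_boundary_def using z1 z2 by blast
    then show False using nb a0 by simp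
  qed
  have "Max (f ` M) \<in> f ` M" using finM Mne by simp
  then obtain s where s1: "s \<in> M" and s2: "f s = Max (f ` M)" by (metis imageE)
  have smax: "f t \<le> f s" if "t \<in> M" for t
  proof -
    have "f t \<in> f ` M" using that by blast
    then show ?thesis unfolding s2 by (rule Max_ge[OF finite_imageI[OF finM]])
  qed
  have sL: "s \<in> L" using s1 MsubL by blast
  have sd: "is_simplex_dim (Suc n) s" using cL s1 unfolding M_def by blast
  then have cs: "card s = n+2" unfolding is_simplex_dim_def by simp
  have ch: "is_chain (sublevel K f (f s)) (Suc n) c"
    unfolding is_chain_def sublevel_def
  proof (intro allI impI)
    fix \<sigma> assume cs0: "c \<sigma> \<noteq> 0"
    then have sM: "\<sigma> \<in> M" by (simp add: M_def)
    have "\<sigma> \<in> L" "is_simplex_dim (Suc n) \<sigma>" using cL[OF cs0] by blast+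
    moreover have "f \<sigma> \<le> f s" using smax[OF sM] .
    ultimately show "\<sigma> \<in> {\<sigma>\<in>K. f \<sigma> \<le> f s} \<and> is_simplex_dim (Suc n) \<sigma>"
      using LK by blast
  qed
  have bs: "is_boundary (sublevel K f (f s)) n \<alpha>" using ch c2 unfolding is_boundary_def by blast
  have "a < f s"
  proof (rule ccontr)
    assume "\<not> a < f s"
    then have "sublevel K f (f s) \<subseteq> sublevel K f a" unfolding sublevel_def by auto
    then show False using bdry_mono[OF bs] nb by blast
  qed
  then show ?thesis using sL cs bs by blast
qed

lemma cyc:
  fixes K :: "'v::linorder set set"
  assumes sc: "simplicial_complex K" and fi: "inj_filtration K f" and sK: "s \<in> K" and cs: "card s = n + 2"
  shows "is_cycle {\<sigma>\<in>K. f \<sigma> < f s} n (\<lambda>\<tau>. incidence s \<tau> :: 'k::field)"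
proof -
  have fs: "finite s" using sc sK unfolding simplicial_complex_def by blast
  have "is_chain {\<sigma>\<in>K. f \<sigma> < f s} n (\<lambda>\<tau>. incidence s \<tau> :: 'k)"
    unfolding is_chain_def
  proof (intro allI impI)
    fix \<tau> assume "incidence s \<tau> \<noteq> (0::'k)"
    then have h: "\<tau> \<subseteq> s" "card (s - \<tau>) = 1" using inc_nz by blast+
    have ft: "finite \<tau>" using finite_subset[OF h(1) fs] .
    have "card \<tau> \<le> card s" using card_mono[OF fs h(1)] .
    then have ct: "card \<tau> = n + 1" using card_Diff_subset[OF ft h(1)] h(2) cs by simp
    have "\<tau> \<noteq> {}" using ct by auto
    then have tK: "\<tau> \<in> K" using sc sK h(1) unfolding simplicial_complex_def by blast
    have "\<tau> \<noteq> s" using h(2) by auto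
    then have "f \<tau> \<noteq> f s" using fi tK sK unfolding inj_filtration_def inj_on_def by blast
    moreover have "f \<tau> \<le> f s" using fi tK sK h(1) unfolding inj_filtration_def filtration_def by blast
    ultimately have "f \<tau> < f s" by simp
    then show "\<tau> \<in> {\<sigma>\<in>K. f \<sigma> < f s} \<and> is_simplex_dim n \<tau>"
      using tK ft ct unfolding is_simplex_dim_def by simp
  qed
  then show ?thesis unfolding is_cycle_def using dd[OF fs] by simp
qed

lemma elem_bd:
  fixes K :: "'v::linorder set set" and f :: "'v set \<Rightarrow> real"
  assumes "s \<in> K" "finite s" "card s = n+2"
  shows "is_boundary {\<sigma>\<in>K. f \<sigma> \<le> f s} n (\<lambda>\<tau>. incidence s \<tau> :: 'k::field)"
proof -
  have "is_chain {\<sigma>\<in>K. f \<sigma> \<le> f s} (Suc n) (elem_chain s :: 'v::linorder set \<Rightarrow> 'k)"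
    unfolding is_chain_def elem_chain_def is_simplex_dim_def using assms by auto
  then show ?thesis unfolding is_boundary_def using bd_elem[of s] by blast
qed

lemma nonterm_bd:
  fixes K :: "'v::linorder set set"
  assumes sc: "simplicial_complex K" and fi: "inj_filtration K f" and sK: "s \<in> K" and cs: "card s = n + 2"
    and nt: "\<not> terminal_simplex TYPE('k::field) K f s"
  shows "is_boundary {\<sigma>\<in>K. f \<sigma> < f s} n (\<lambda>\<tau>. incidence s \<tau> :: 'k)"
proof -
  have fs: "finite s" using sc sK unfolding simplicial_complex_def by blast
  have "\<not> (card s = n+2 \<and> is_cycle {\<sigma>\<in>K. f \<sigma> < f s} n z \<and> \<not> is_boundary {\<sigma>\<in>K. f \<sigma> < f s} n z
          \<and> is_boundary {\<sigma>\<in>K. f \<sigma> \<le> f s} n z)" for z :: "'v set \<Rightarrow> 'k"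
    using nt sK unfolding terminal_simplex_def by blast
  from this[of "\<lambda>\<tau>. incidence s \<tau>"] cyc[OF sc fi sK cs] elem_bd[OF sK fs cs] cs
  show ?thesis by blast
qed


lemma main:
  fixes K :: "'v::linorder set set" and f :: "'v set \<Rightarrow> real" and \<alpha> :: "'v set \<Rightarrow> 'k::field"
  assumes sc: "simplicial_complex K" and fi: "inj_filtration K f"
    and t0K: "\<tau>0 \<in> K" and t0c: "card \<tau>0 = n+2"
    and t0b: "is_boundary {\<sigma>\<in>K. f \<sigma> \<le> f \<tau>0} n \<alpha>"
    and t0nb: "\<not> is_boundary {\<sigma>\<in>K. f \<sigma> < f \<tau>0} n \<alpha>"
    and e0: "0 \<le> \<epsilon>"
    and eb: "\<And>\<tau>. birth_simplex TYPE('k) K f \<tau> \<Longrightarrow> card \<tau> = n+2 \<Longrightarrow> f \<tau> > f \<tau>0 \<Longrightarrow> 2*\<epsilon> \<le> f \<tau> - f \<tau>0"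
    and et: "\<And>\<tau>. terminal_simplex TYPE('k) K f \<tau> \<Longrightarrow> card \<tau> = n+2 \<Longrightarrow> f \<tau> < f \<tau>0 \<Longrightarrow> 2*\<epsilon> \<le> f \<tau>0 - f \<tau>"
  shows "Sigma_eps K f n \<alpha> \<epsilon> = {\<tau>0}"
proof
  have fin: "finite K" using sc unfolding simplicial_complex_def by blast
  have finK: "\<And>\<sigma>. \<sigma> \<in> K \<Longrightarrow> finite \<sigma>" using sc unfolding simplicial_complex_def by blast
  have finj: "inj_on f K" using fi unfolding inj_filtration_def by blast
  show "{\<tau>0} \<subseteq> Sigma_eps K f n \<alpha> \<epsilon>"
  proof -
    have "is_Delta K f n \<alpha> \<tau>0"
      unfolding is_Delta_def
    proof (intro conjI allI impI)
      show "\<tau>0 \<in> K" by (rule t0K)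
      show "is_boundary (sublevel K f (f \<tau>0)) n \<alpha>" using t0b unfolding sublevel_def .
      fix r assume "r < f \<tau>0"
      then have "sublevel K f r \<subseteq> {\<sigma>\<in>K. f \<sigma> < f \<tau>0}" unfolding sublevel_def by auto
      then show "\<not> is_boundary (sublevel K f r) n \<alpha>" using t0nb bdry_mono by blast
    qed
    moreover have "\<forall>\<sigma>\<in>K. \<bar>f \<sigma> - f \<sigma>\<bar> \<le> \<epsilon>" using e0 by simp
    ultimately show ?thesis unfolding Sigma_eps_def using fi by blast
  qed
  show "Sigma_eps K f n \<alpha> \<epsilon> \<subseteq> {\<tau>0}"
  proof
    fix \<tau> assume "\<tau> \<in> Sigma_eps K f n \<alpha> \<epsilon>"
    then obtain g where gi: "inj_filtration K g" and gc: "\<forall>\<sigma>\<in>K. \<bar>f \<sigma> - g \<sigma>\<bar> \<le> \<epsilon>"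
      and gd: "is_Delta K g n \<alpha> \<tau>"
      unfolding Sigma_eps_def by blast
    have ginj: "inj_on g K" using gi unfolding inj_filtration_def by blast
    have gt0: "\<bar>f \<tau>0 - g \<tau>0\<bar> \<le> \<epsilon>" using gc t0K by blast
    let ?P = "sublevel K g (g \<tau>0)"
    have finP: "finite ?P" unfolding sublevel_def using fin by simp
    have key: "is_boundary ?P n (\<lambda>\<tau>. incidence s \<tau> :: 'k)"
      if "s \<in> K" "card s = n+2" "f s \<le> f \<tau>0" for s
      using that
    proof (induction s rule: measure_induct_rule[of "\<lambda>s. card {t\<in>K. f t < f s}"])
      case (less s)
      show ?case
      proof (cases "g s \<le> g \<tau>0")
        case True
        have "is_chain ?P (Suc n) (elem_chain s :: 'v set \<Rightarrow> 'k)"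
          unfolding is_chain_def elem_chain_def sublevel_def is_simplex_dim_def
          using less.prems True finK by auto
        then show ?thesis unfolding is_boundary_def using bd_elem[of s] by blast
      next
        case False
        have "s \<noteq> \<tau>0" using False by auto
        then have "f s \<noteq> f \<tau>0" using finj less.prems(1) t0K unfolding inj_on_def by blast
        then have fl: "f s < f \<tau>0" using less.prems(3) by simp
        have gs: "\<bar>f s - g s\<bar> \<le> \<epsilon>" using gc less.prems(1) by blast
        have lt2: "f \<tau>0 - f s < 2*\<epsilon>" using False gs gt0 unfolding abs_le_iff by linarith
        have nt: "\<not> terminal_simplex TYPE('k) K f s"
        proof
          assume "terminal_simplex TYPE('k) K f s"
          then have "2*\<epsilon> \<le> f \<tau>0 - f s" using et less.prems(2) fl by blast
          then show False using lt2 by linarith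
        qed
        have "is_boundary {\<sigma>\<in>K. f \<sigma> < f s} n (\<lambda>\<tau>. incidence s \<tau> :: 'k)"
          by (rule nonterm_bd[OF sc fi less.prems(1,2) nt])
        then obtain e where e1: "is_chain {\<sigma>\<in>K. f \<sigma> < f s} (Suc n) e"
          and e2: "boundary_op e = (\<lambda>\<tau>. incidence s \<tau> :: 'k)"
          unfolding is_boundary_def by blast
        define S where "S = {\<sigma>\<in>K. f \<sigma> < f s \<and> card \<sigma> = n+2}"
        have "is_boundary ?P n (boundary_op e)"
        proof (rule comb[OF finP])
          show "finite S" using fin unfolding S_def by simp
          show "{\<sigma>. e \<sigma> \<noteq> 0} \<subseteq> S" using e1 unfolding is_chain_def S_def is_simplex_dim_def by auto
          show "\<forall>t\<in>S. is_boundary ?P n (\<lambda>\<tau>. incidence t \<tau> :: 'k)"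
          proof
            fix t assume t: "t \<in> S"
            have tK: "t \<in> K" and ft: "f t < f s" and ct: "card t = n+2" using t unfolding S_def by blast+
            have lt: "card {u\<in>K. f u < f t} < card {u\<in>K. f u < f s}"
            proof (rule psubset_card_mono)
              show "finite {u\<in>K. f u < f s}" using fin by simp
              have "{u\<in>K. f u < f t} \<subseteq> {u\<in>K. f u < f s}" using ft by auto
              moreover have "t \<in> {u\<in>K. f u < f s}" "t \<notin> {u\<in>K. f u < f t}" using tK ft by auto
              ultimately show "{u\<in>K. f u < f t} \<subset> {u\<in>K. f u < f s}" by blast
            qed
            have "f t \<le> f \<tau>0" using ft fl by simp
            then show "is_boundary ?P n (\<lambda>\<tau>. incidence t \<tau> :: 'k)"
              using less.IH[OF lt tK ct] by blast
          qed
        qed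
        then show ?thesis using e2 by simp
      qed
    qed
    have claim1: "is_boundary ?P n \<alpha>"
    proof -
      obtain c0 where c01: "is_chain {\<sigma>\<in>K. f \<sigma> \<le> f \<tau>0} (Suc n) c0" and c02: "boundary_op c0 = \<alpha>"
        using t0b unfolding is_boundary_def by blast
      have "is_boundary ?P n (boundary_op c0)"
      proof (rule comb[OF finP, of "{\<sigma>\<in>K. f \<sigma> \<le> f \<tau>0 \<and> card \<sigma> = n+2}"])
        show "finite {\<sigma>\<in>K. f \<sigma> \<le> f \<tau>0 \<and> card \<sigma> = n+2}" using fin by simp
        show "{\<sigma>. c0 \<sigma> \<noteq> 0} \<subseteq> {\<sigma>\<in>K. f \<sigma> \<le> f \<tau>0 \<and> card \<sigma> = n+2}"
          using c01 unfolding is_chain_def is_simplex_dim_def by auto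
        show "\<forall>t\<in>{\<sigma>\<in>K. f \<sigma> \<le> f \<tau>0 \<and> card \<sigma> = n+2}. is_boundary ?P n (\<lambda>\<tau>. incidence t \<tau> :: 'k)"
          using key by blast
      qed
      then show ?thesis using c02 by simp
    qed
    have claim2: "\<not> is_boundary {\<sigma>\<in>K. g \<sigma> < g \<tau>0} n \<alpha>"
    proof
      assume "is_boundary {\<sigma>\<in>K. g \<sigma> < g \<tau>0} n \<alpha>"
      then obtain c where c1: "is_chain {\<sigma>\<in>K. g \<sigma> < g \<tau>0} (Suc n) c" and c2: "boundary_op c = \<alpha>"
        unfolding is_boundary_def by blast
      have cL: "c \<sigma> \<noteq> 0 \<Longrightarrow> \<sigma> \<in> K \<and> g \<sigma> < g \<tau>0 \<and> is_simplex_dim (Suc n) \<sigma>" for \<sigma>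
        using c1 unfolding is_chain_def by blast
      define U where "U = {\<sigma>. c \<sigma> \<noteq> 0} - {\<sigma>\<in>K. f \<sigma> < f \<tau>0}"
      have Usub: "U \<subseteq> K" using cL unfolding U_def by blast
      have finU: "finite U" using finite_subset[OF Usub fin] .
      have Une: "U \<noteq> {}"
      proof
        assume U0: "U = {}"
        have "is_chain {\<sigma>\<in>K. f \<sigma> < f \<tau>0} (Suc n) c"
          unfolding is_chain_def
        proof (intro allI impI)
          fix \<sigma> assume cs: "c \<sigma> \<noteq> 0"
          then have "\<sigma> \<in> {\<sigma>\<in>K. f \<sigma> < f \<tau>0}" using U0 unfolding U_def by blast
          then show "\<sigma> \<in> {\<sigma>\<in>K. f \<sigma> < f \<tau>0} \<and> is_simplex_dim (Suc n) \<sigma>" using cL[OF cs] by blast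
        qed
        then show False using t0nb c2 unfolding is_boundary_def by blast
      qed
      have "Max (f ` U) \<in> f ` U" using finU Une by simp
      then obtain u where uU: "u \<in> U" and u2: "f u = Max (f ` U)" by (metis imageE)
      have umax: "f t \<le> f u" if "t \<in> U" for t
      proof -
        have "f t \<in> f ` U" using that by blast
        then show ?thesis unfolding u2 by (rule Max_ge[OF finite_imageI[OF finU]])
      qed
      have cu: "c u \<noteq> 0" using uU unfolding U_def by blast
      have uK: "u \<in> K" and ug: "g u < g \<tau>0" and ud: "is_simplex_dim (Suc n) u" using cL[OF cu] by blast+
      have ucard: "card u = n+2" using ud unfolding is_simplex_dim_def by simp
      have "u \<noteq> \<tau>0" using ug by auto
      then have "f u \<noteq> f \<tau>0" using finj uK t0K unfolding inj_on_def by blast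
      moreover have "\<not> f u < f \<tau>0" using uU uK unfolding U_def by blast
      ultimately have fu: "f \<tau>0 < f u" by simp
      obtain c0 where c01: "is_chain {\<sigma>\<in>K. f \<sigma> \<le> f \<tau>0} (Suc n) c0" and c02: "boundary_op c0 = \<alpha>"
        using t0b unfolding is_boundary_def by blast
      have c0L: "c0 \<sigma> \<noteq> 0 \<Longrightarrow> \<sigma> \<in> K \<and> f \<sigma> \<le> f \<tau>0 \<and> is_simplex_dim (Suc n) \<sigma>" for \<sigma>
        using c01 unfolding is_chain_def by blast
      define h where "h = (\<lambda>\<sigma>. (c0 \<sigma> - c \<sigma> + c u * elem_chain u \<sigma>) / c u)"
      have hch: "is_chain {\<sigma>\<in>K. f \<sigma> < f u} (Suc n) h"
        unfolding is_chain_def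
      proof (intro allI impI)
        fix \<sigma> assume hs: "h \<sigma> \<noteq> 0"
        show "\<sigma> \<in> {\<sigma>\<in>K. f \<sigma> < f u} \<and> is_simplex_dim (Suc n) \<sigma>"
        proof (cases "c0 \<sigma> \<noteq> 0")
          case True
          then show ?thesis using c0L[OF True] fu by auto
        next
          case False
          have sneq: "\<sigma> \<noteq> u"
          proof
            assume "\<sigma> = u"
            then have "h \<sigma> = 0" using False cu by (simp add: h_def elem_chain_def)
            then show False using hs by simp
          qed
          have cs: "c \<sigma> \<noteq> 0"
          proof
            assume "c \<sigma> = 0"
            then have "h \<sigma> = 0" using False sneq by (simp add: h_def elem_chain_def)
            then show False using hs by simp
          qed
          have sK: "\<sigma> \<in> K" and sd: "is_simplex_dim (Suc n) \<sigma>" using cL[OF cs] by blast+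
          have "f \<sigma> < f u"
          proof (cases "f \<sigma> < f \<tau>0")
            case True then show ?thesis using fu by simp
          next
            case False
            then have "\<sigma> \<in> U" using cs unfolding U_def by blast
            then have "f \<sigma> \<le> f u" by (rule umax)
            moreover have "f \<sigma> \<noteq> f u" using sneq finj sK uK unfolding inj_on_def by blast
            ultimately show ?thesis by simp
          qed
          then show ?thesis using sK sd by simp
        qed
      qed
      have hbd: "boundary_op h = (\<lambda>\<tau>. incidence u \<tau> :: 'k)"
      proof
        fix \<tau>
        have s1: "{\<sigma>. h \<sigma> \<noteq> 0} \<subseteq> K" using hch unfolding is_chain_def by auto
        have s2: "{\<sigma>. c0 \<sigma> \<noteq> 0} \<subseteq> K" using c0L by blast
        have s3: "{\<sigma>. c \<sigma> \<noteq> 0} \<subseteq> K" using cL by blast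
        have s4: "{\<sigma>. (elem_chain u \<sigma> :: 'k) \<noteq> 0} \<subseteq> K" using uK by (auto simp: elem_chain_def)
        have A: "(\<Sum>\<sigma>\<in>K. c0 \<sigma> * incidence \<sigma> \<tau>) = \<alpha> \<tau>"
          using bsum[OF fin s2, of \<tau>] c02 by simp
        have B: "(\<Sum>\<sigma>\<in>K. c \<sigma> * incidence \<sigma> \<tau>) = \<alpha> \<tau>"
          using bsum[OF fin s3, of \<tau>] c2 by simp
        have C: "(\<Sum>\<sigma>\<in>K. (elem_chain u \<sigma> :: 'k) * incidence \<sigma> \<tau>) = incidence u \<tau>"
          using bsum[OF fin s4, of \<tau>] bd_elem[of u] by metis
        have "boundary_op h \<tau> = (\<Sum>\<sigma>\<in>K. h \<sigma> * incidence \<sigma> \<tau>)" by (rule bsum[OF fin s1])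
        also have "\<dots> = (\<Sum>\<sigma>\<in>K. (c0 \<sigma> * incidence \<sigma> \<tau> - c \<sigma> * incidence \<sigma> \<tau>
                  + c u * (elem_chain u \<sigma> * incidence \<sigma> \<tau>)) / c u)"
        proof (rule sum.cong[OF refl])
          fix \<sigma>
          show "h \<sigma> * incidence \<sigma> \<tau> = (c0 \<sigma> * incidence \<sigma> \<tau> - c \<sigma> * incidence \<sigma> \<tau>
                  + c u * (elem_chain u \<sigma> * incidence \<sigma> \<tau>)) / c u"
            unfolding h_def by (simp add: algebra_simps)
        qed
        also have "\<dots> = ((\<Sum>\<sigma>\<in>K. c0 \<sigma> * incidence \<sigma> \<tau>) - (\<Sum>\<sigma>\<in>K. c \<sigma> * incidence \<sigma> \<tau>)
                  + c u * (\<Sum>\<sigma>\<in>K. (elem_chain u \<sigma> :: 'k) * incidence \<sigma> \<tau>)) / c u"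
          by (simp add: sum_divide_distrib[symmetric] sum_subtractf sum.distrib sum_distrib_left)
        also have "\<dots> = incidence u \<tau>" unfolding A B C using cu by simp
        finally show "boundary_op h \<tau> = incidence u \<tau>" .
      qed
      have "is_boundary {\<sigma>\<in>K. f \<sigma> < f u} n (boundary_op (elem_chain u :: 'v set \<Rightarrow> 'k))"
        unfolding bd_elem is_boundary_def using hch hbd by blast
      then have "birth_simplex TYPE('k) K f u"
        unfolding birth_simplex_def using uK ucard by blast
      then have "2*\<epsilon> \<le> f u - f \<tau>0" using eb ucard fu by blast
      moreover have "\<bar>f u - g u\<bar> \<le> \<epsilon>" using gc uK by blast
      ultimately show False using ug gt0 unfolding abs_le_iff by linarith
    qed
    have tK: "\<tau> \<in> K" and tb: "is_boundary (sublevel K g (g \<tau>)) n \<alpha>"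
      and tnb: "\<forall>r<g \<tau>. \<not> is_boundary (sublevel K g r) n \<alpha>"
      using gd unfolding is_Delta_def by blast+
    have "\<not> g \<tau>0 < g \<tau>" using tnb claim1 by blast
    moreover have "\<not> g \<tau> < g \<tau>0"
    proof
      assume "g \<tau> < g \<tau>0"
      then have "sublevel K g (g \<tau>) \<subseteq> {\<sigma>\<in>K. g \<sigma> < g \<tau>0}" unfolding sublevel_def by auto
      then show False using claim2 bdry_mono[OF tb] by blast
    qed
    ultimately have "g \<tau> = g \<tau>0" by simp
    then have "\<tau> = \<tau>0" using ginj tK t0K unfolding inj_on_def by blast
    then show "\<tau> \<in> {\<tau>0}" by simp
  qed
qed


theorem theorem3p6:
  fixes K :: "'v::linorder set set" and f :: "'v set \<Rightarrow> real"
    and n :: nat and \<alpha> :: "'v set \<Rightarrow> 'k::field" and a b :: real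
  assumes "simplicial_complex K"
    and "inj_filtration K f"
    and "n > 0"
    and "is_cycle (sublevel K f a) n \<alpha>"
    and "\<not> is_boundary (sublevel K f a) n \<alpha>"
    and "birth K f n a \<alpha> = a"
    and "\<exists>q\<ge>a. is_boundary (sublevel K f q) n \<alpha>"
    and "termination_scale K f n a \<alpha> = b"
    and "b > a"
  shows "terminally_rigid K f n \<alpha>
           ((1/2) * Min ({b - a}
              \<union> {\<bar>f \<tau> - b\<bar> | \<tau>. birth_simplex TYPE('k) K f \<tau> \<and> card \<tau> = n + 2 \<and> f \<tau> > b}
              \<union> {\<bar>f \<tau> - b\<bar> | \<tau>. terminal_simplex TYPE('k) K f \<tau> \<and> card \<tau> = n + 2 \<and> f \<tau> < b}))"
proof -
  have fin: "finite K" using assms(1) unfolding simplicial_complex_def by blast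
  obtain q where q1: "q \<ge> a" and q2: "is_boundary (sublevel K f q) n \<alpha>" using assms(7) by blast
  define A where "A = {s\<in>K. card s = n+2 \<and> is_boundary (sublevel K f (f s)) n \<alpha>}"
  have sub: "sublevel K f r \<subseteq> K" for r unfolding sublevel_def by blast
  have "\<exists>s\<in>sublevel K f q. card s = n+2 \<and> is_boundary (sublevel K f (f s)) n \<alpha> \<and> a < f s"
    by (rule top_simplex[OF fin q2 sub assms(5)])
  then have Ane: "A \<noteq> {}" unfolding A_def sublevel_def by blast
  have finA: "finite A" using fin unfolding A_def by simp
  have "Min (f ` A) \<in> f ` A" using finA Ane by simp
  then obtain \<tau>0 where t0A: "\<tau>0 \<in> A" and t0e: "f \<tau>0 = Min (f ` A)" by (metis imageE)
  have t0min: "f \<tau>0 \<le> f s" if "s \<in> A" for s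
  proof -
    have "f s \<in> f ` A" using that by blast
    then show ?thesis unfolding t0e by (rule Min_le[OF finite_imageI[OF finA]])
  qed
  have t0K: "\<tau>0 \<in> K" and t0c: "card \<tau>0 = n+2" and t0b: "is_boundary (sublevel K f (f \<tau>0)) n \<alpha>"
    using t0A unfolding A_def by blast+
  have lowA: "f \<tau>0 \<le> r" if br: "is_boundary (sublevel K f r) n \<alpha>" for r
  proof -
    obtain s where "s \<in> sublevel K f r" "card s = n+2" "is_boundary (sublevel K f (f s)) n \<alpha>"
      using top_simplex[OF fin br sub assms(5)] by blast
    then have "s \<in> A" "f s \<le> r" unfolding A_def sublevel_def by auto
    then show ?thesis using t0min by force
  qed
  have ablt: "a < f \<tau>0"
  proof -
    obtain s where "s \<in> sublevel K f (f \<tau>0)" "a < f s"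
      using top_simplex[OF fin t0b sub assms(5)] by blast
    then show ?thesis unfolding sublevel_def by auto
  qed
  have "termination_scale K f n a \<alpha> = f \<tau>0"
    unfolding termination_scale_def
  proof (rule cInf_eq_minimum)
    show "f \<tau>0 \<in> {q. a \<le> q \<and> is_boundary (sublevel K f q) n \<alpha>}" using ablt t0b by simp
    fix x assume "x \<in> {q. a \<le> q \<and> is_boundary (sublevel K f q) n \<alpha>}"
    then show "f \<tau>0 \<le> x" using lowA by blast
  qed
  then have bdef: "b = f \<tau>0" using assms(8) by simp
  have t0nb: "\<not> is_boundary {\<sigma>\<in>K. f \<sigma> < f \<tau>0} n \<alpha>"
  proof
    assume h: "is_boundary {\<sigma>\<in>K. f \<sigma> < f \<tau>0} n \<alpha>"
    have "{\<sigma>\<in>K. f \<sigma> < f \<tau>0} \<subseteq> K" by blast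
    then obtain s where "s \<in> {\<sigma>\<in>K. f \<sigma> < f \<tau>0}" "card s = n+2" "is_boundary (sublevel K f (f s)) n \<alpha>"
      using top_simplex[OF fin h _ assms(5)] by blast
    then have "s \<in> A" "f s < f \<tau>0" unfolding A_def by auto
    then show False using t0min by force
  qed
  define E where "E = {b - a}
              \<union> {\<bar>f \<tau> - b\<bar> | \<tau>. birth_simplex TYPE('k) K f \<tau> \<and> card \<tau> = n + 2 \<and> f \<tau> > b}
              \<union> {\<bar>f \<tau> - b\<bar> | \<tau>. terminal_simplex TYPE('k) K f \<tau> \<and> card \<tau> = n + 2 \<and> f \<tau> < b}"
  have "E \<subseteq> insert (b - a) ((\<lambda>\<tau>. \<bar>f \<tau> - b\<bar>) ` K)"
    unfolding E_def birth_simplex_def terminal_simplex_def by blast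
  then have finE: "finite E" using finite_subset fin by blast
  have Ene: "E \<noteq> {}" unfolding E_def by simp
  have Epos: "\<forall>x\<in>E. 0 \<le> x" using assms(9) unfolding E_def by auto
  have "Sigma_eps K f n \<alpha> ((1/2) * Min E) = {\<tau>0}"
  proof (rule main[OF assms(1,2) t0K t0c])
    show "is_boundary {\<sigma>\<in>K. f \<sigma> \<le> f \<tau>0} n \<alpha>" using t0b unfolding sublevel_def .
    show "\<not> is_boundary {\<sigma>\<in>K. f \<sigma> < f \<tau>0} n \<alpha>" by (rule t0nb)
    have "0 \<le> Min E" using Min_ge_iff[OF finE Ene] Epos by blast
    then show "0 \<le> (1/2) * Min E" by simp
  next
    fix \<tau> assume h: "birth_simplex TYPE('k) K f \<tau>" "card \<tau> = n+2" "f \<tau>0 < f \<tau>"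
    then have "\<bar>f \<tau> - b\<bar> \<in> E" unfolding E_def bdef by blast
    then have "Min E \<le> \<bar>f \<tau> - b\<bar>" by (rule Min_le[OF finE])
    then show "2 * ((1/2) * Min E) \<le> f \<tau> - f \<tau>0" using bdef h(3) by simp
  next
    fix \<tau> assume h: "terminal_simplex TYPE('k) K f \<tau>" "card \<tau> = n+2" "f \<tau> < f \<tau>0"
    then have "\<bar>f \<tau> - b\<bar> \<in> E" unfolding E_def bdef by blast
    then have "Min E \<le> \<bar>f \<tau> - b\<bar>" by (rule Min_le[OF finE])
    then show "2 * ((1/2) * Min E) \<le> f \<tau>0 - f \<tau>" using bdef h(3) by simp
  qed
  then show ?thesis unfolding terminally_rigid_def E_def by simp
qed

end
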